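(* Let $n\ge1$, and let either (constant case) $s\in(0,1)$, $p\in(1,\infty)$ with $p>1/(1-s)$ if $p<2$, and $K:B_2\times\mathbb{R}^n\to[0,\infty)$ measurable with $K(x,y)=K(x,-y)$, $\lambda|y|^{-n-sp}\le K(x,y)\le\Lambda|y|^{-n-sp}$ for $x,y\in B_2$, and $0\le K(x,y)\le M|y|^{-n-\gamma}$ for $x\in B_2$, $y\in\mathbb{R}^n\setminus B_{1/4}$ (with constants $\Lambda\ge\lambda>0$, $M,\gamma>0$); or (variable case) the same with $s,p$ replaced by functions $s(x),p(x)$ on $B_2$ satisfying $0<s_0<s(x)<s_1<1$, $1<p_0<p(x)<p_1<\infty$, and $p(x)(1-s(x))-1>\tau>0$ whenever $p(x)<2$, and with $|y|^{-n-sp}$ replaced by $|y|^{-n-s(x)p(x)}$. Let $L$ be the corresponding operator $$Lu(x)=\operatorname{PV}\int_{\mathbb{R}^n}|u(x)-u(x+y)|^{p(x)-2}(u(x)-u(x+y))K(x,y)\,dy$$ (with $p(x)\equiv p$ in the constant case). Let $C\in\mathbb{R}$ and suppose $u\in L^\infty(\mathbb{R}^n)$ satisfies $Lu\le C$ in $B_1$ in the viscosity sense. Suppose $x_0\in B_1$, $r>0$ with $B_r(x_0)\subset B_1$, and $\phi\in C^2(B_r(x_0))$ satisfies $\phi(x_0)=u(x_0)$ and $\phi\ge u$ in $B_r(x_0)$. Then $Lu$ is defined pointwise at $x_0$, i.e. the function $y\mapsto\delta(u,x_0,y)K(x_0,y)$ is integrable over $\mathbb{R}^n$, and $Lu(x_0)=\int_{\mathbb{R}^n}\delta(u,x_0,y)K(x_0,y)\,dy\le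 C$.
   Context: $B_r$ denotes the open ball of radius $r$ centred at the origin, $B_r(x_0)$ the ball centred at $x_0$. $\operatorname{PV}\int=\lim_{r\to0}\int_{\mathbb{R}^n\setminus B_r}$; $|t|^{q-2}t:=0$ at $t=0$. For a function $v$, $\delta(v,x,y)=\tfrac12|v(x)-v(x+y)|^{p(x)-2}(v(x)-v(x+y))+\tfrac12|v(x)-v(x-y)|^{p(x)-2}(v(x)-v(x-y))$. Viscosity subsolution: a function $u\in L^\infty(\mathbb{R}^n)$ upper semicontinuous in an open set $D$ is a viscosity subsolution of $Lu\le C$ in $D$ if whenever $x_0\in D$, $r>0$, $\phi\in C^2(B_r(x_0))$ with $B_r(x_0)\subset D$, $\phi(x_0)=u(x_0)$ and $\phi\ge u$ in $B_r(x_0)$, then $L\phi_r(x_0)\le C$, where $\phi_r=\phi$ in $B_r(x_0)$ and $\phi_r=u$ in $\mathbb{R}^n\setminus B_r(x_0)$. *)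

theory Defs
  imports "HOL-Analysis.Analysis"
begin

definition spow :: "real \<Rightarrow> real \<Rightarrow> real" where
  "spow q t = (if t = 0 then 0 else \<bar>t\<bar> powr (q - 2) * t)"

definition usc_on :: "'a::topological_space set \<Rightarrow> ('a \<Rightarrow> real) \<Rightarrow> bool" where
  "usc_on D u \<longleftrightarrow> (\<forall>x\<in>D. \<forall>e>0. \<forall>\<^sub>F y in at x. u y < u x + e)"

definition C2_on :: "'a::euclidean_space set \<Rightarrow> ('a \<Rightarrow> real) \<Rightarrow> bool" where
  "C2_on S \<phi> \<longleftrightarrow> (\<exists>D :: 'a \<Rightarrow> ('a \<Rightarrow>\<^sub>L real). \<exists>D2 :: 'a \<Rightarrow> ('a \<Rightarrow>\<^sub>L ('a \<Rightarrow>\<^sub>L real)).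
      (\<forall>x\<in>S. (\<phi> has_derivative blinfun_apply (D x)) (at x)) \<and>
      (\<forall>x\<in>S. (D has_derivative blinfun_apply (D2 x)) (at x)) \<and>
      continuous_on S D2)"

definition Lintegrand :: "('a::euclidean_space \<Rightarrow> real) \<Rightarrow> ('a \<Rightarrow> 'a \<Rightarrow> real) \<Rightarrow> ('a \<Rightarrow> real)
    \<Rightarrow> 'a \<Rightarrow> 'a \<Rightarrow> real" where
  "Lintegrand p K v x y = spow (p x) (v x - v (x + y)) * K x y"

definition PV_has_value :: "('a::euclidean_space \<Rightarrow> real) \<Rightarrow> ('a \<Rightarrow> 'a \<Rightarrow> real) \<Rightarrow> ('a \<Rightarrow> real)
    \<Rightarrow> 'a \<Rightarrow> real \<Rightarrow> bool" where
  "PV_has_value p K v x l \<longleftrightarrow>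
     (\<forall>\<^sub>F \<rho> in at_right 0. set_integrable lborel (- ball 0 \<rho>) (Lintegrand p K v x)) \<and>
     ((\<lambda>\<rho>. set_lebesgue_integral lborel (- ball 0 \<rho>) (Lintegrand p K v x)) \<longlongrightarrow> l) (at_right 0)"

definition delta :: "('a::euclidean_space \<Rightarrow> real) \<Rightarrow> ('a \<Rightarrow> real) \<Rightarrow> 'a \<Rightarrow> 'a \<Rightarrow> real" where
  "delta p v x y = spow (p x) (v x - v (x + y)) / 2 + spow (p x) (v x - v (x - y)) / 2"

definition visc_sub :: "('a::euclidean_space \<Rightarrow> real) \<Rightarrow> ('a \<Rightarrow> 'a \<Rightarrow> real) \<Rightarrow> ('a \<Rightarrow> real)
    \<Rightarrow> real \<Rightarrow> 'a set \<Rightarrow> bool" where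
  "visc_sub p K u C D \<longleftrightarrow>
     u \<in> borel_measurable lborel \<and> bounded (range u) \<and> usc_on D u \<and>
     (\<forall>x0\<in>D. \<forall>r>0. \<forall>\<phi>. ball x0 r \<subseteq> D \<and> C2_on (ball x0 r) \<phi> \<and> \<phi> x0 = u x0 \<and>
        (\<forall>x\<in>ball x0 r. \<phi> x \<ge> u x) \<longrightarrow>
        (\<exists>l. l \<le> C \<and> PV_has_value p K (\<lambda>z. if z \<in> ball x0 r then \<phi> z else u z) x0 l))"

definition admissible_sp :: "('a::euclidean_space \<Rightarrow> real) \<Rightarrow> ('a \<Rightarrow> real) \<Rightarrow> bool" where
  "admissible_sp s p \<longleftrightarrow>
    (\<exists>s' p'. s = (\<lambda>_. s') \<and> p = (\<lambda>_. p') \<and> 0 < s' \<and> s' < 1 \<and> 1 < p' \<and>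
        (p' < 2 \<longrightarrow> p' > 1 / (1 - s'))) \<or>
    (\<exists>s0 s1 p0 p1 \<tau>. 0 < s0 \<and> s1 < 1 \<and> 1 < p0 \<and> \<tau> > 0 \<and>
        (\<forall>x\<in>ball 0 2. s0 < s x \<and> s x < s1 \<and> p0 < p x \<and> p x < p1 \<and>
           (p x < 2 \<longrightarrow> p x * (1 - s x) - 1 > \<tau>)))"

definition admissible_kernel :: "('a::euclidean_space \<Rightarrow> real) \<Rightarrow> ('a \<Rightarrow> real) \<Rightarrow> ('a \<Rightarrow> 'a \<Rightarrow> real)
    \<Rightarrow> real \<Rightarrow> real \<Rightarrow> real \<Rightarrow> real \<Rightarrow> bool" where
  "admissible_kernel s p K lam Lam M \<gamma> \<longleftrightarrow>
     0 < lam \<and> lam \<le> Lam \<and> 0 < M \<and> 0 < \<gamma> \<and>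
     (\<lambda>z. if fst z \<in> ball 0 2 then K (fst z) (snd z) else 0) \<in> borel_measurable (lborel \<Otimes>\<^sub>M lborel) \<and>
     (\<forall>x\<in>ball 0 2. \<forall>y. K x y \<ge> 0 \<and> K x y = K x (- y)) \<and>
     (\<forall>x\<in>ball 0 2. \<forall>y\<in>ball 0 2.
        lam * norm y powr (- real DIM('a) - s x * p x) \<le> K x y \<and>
        K x y \<le> Lam * norm y powr (- real DIM('a) - s x * p x)) \<and>
     (\<forall>x\<in>ball 0 2. \<forall>y. y \<notin> ball 0 (1/4) \<longrightarrow> K x y \<le> M * norm y powr (- real DIM('a) - \<gamma>))"

end

theory Submission
  imports Defs "HOL-Analysis.Analysis"
begin


lemma spow_pos: "spow q t = t powr (q - 1)" if "t \<ge> 0"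
proof (cases "t = 0")
  case False
  then have "t powr (q - 2) * t = t powr (q - 2) * t powr 1" using that by simp
  also have "\<dots> = t powr (q - 2 + 1)" using False that by (simp only: powr_add)
  also have "q - 2 + 1 = q - 1" by simp
  finally show ?thesis using False that by (simp add: spow_def)
qed (simp add: spow_def)

lemma spow_neg: "spow q (-t) = - spow q t"
  by (auto simp: spow_def)

lemma spow_negpos: "t \<le> 0 \<Longrightarrow> spow q t = - ((-t) powr (q - 1))"
  using spow_pos[of "-t" q] spow_neg[of q "-t"] by simp

lemma le_powr_small: "0 \<le> x \<Longrightarrow> x \<le> 1 \<Longrightarrow> q \<le> 1 \<Longrightarrow> x \<le> (x::real) powr q"
  using powr_mono'[of q 1 x] by (cases "x = 0") auto

lemma powr_subadd:
  fixes a b q :: real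
  assumes "a \<ge> 0" "b \<ge> 0" "0 < q" "q \<le> 1"
  shows "(a + b) powr q \<le> a powr q + b powr q"
proof (cases "a + b = 0")
  case True then show ?thesis using assms by auto
next
  case False
  then have s: "a + b > 0" using assms by auto
  have 1: "a / (a+b) \<le> (a/(a+b)) powr q"
    using assms s by (intro le_powr_small) auto
  have 2: "b / (a+b) \<le> (b/(a+b)) powr q"
    using assms s by (intro le_powr_small) auto
  have "a/(a+b) + b/(a+b) = 1" using s by (simp add: add_divide_distrib[symmetric])
  then have "1 \<le> (a/(a+b)) powr q + (b/(a+b)) powr q"
    using 1 2 by linarith
  then have "(a+b) powr q * 1 \<le> (a+b) powr q * ((a/(a+b)) powr q + (b/(a+b)) powr q)"
    by (intro mult_left_mono) auto
  also have "\<dots> = a powr q + b powr q"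
    using s assms by (simp add: distrib_left powr_divide)
  finally show ?thesis by simp
qed

lemma spow_holder_aux:
  fixes x z q :: real
  assumes "z \<le> x" "1 < q" "q \<le> 2"
  shows "\<bar>spow q x - spow q z\<bar> \<le> 2 * (x - z) powr (q - 1)"
proof -
  have q: "0 < q - 1" "q - 1 \<le> 1" using assms by auto
  have mono: "spow q z \<le> spow q x"
  proof (cases "z \<ge> 0")
    case True then show ?thesis using assms spow_pos q by (simp add: powr_mono2)
  next
    case False
    show ?thesis
    proof (cases "x \<ge> 0")
      case True
      have "0 \<le> (-z) powr (q-1)" "0 \<le> x powr (q-1)" by auto
      then show ?thesis using False True spow_pos[of x q] spow_negpos[of z q] by linarith
    next
      case False
      then show ?thesis using \<open>\<not> z \<ge> 0\<close> spow_negpos[of x q] spow_negpos[of z q] assms q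
        by (simp add: powr_mono2)
    qed
  qed
  have "spow q x - spow q z \<le> 2 * (x - z) powr (q - 1)"
  proof (cases "z \<ge> 0")
    case True
    have "x powr (q-1) \<le> z powr (q-1) + (x-z) powr (q-1)"
      using powr_subadd[of z "x - z" "q - 1"] True assms q by simp
    moreover have "0 \<le> (x - z) powr (q - 1)" by simp
    ultimately show ?thesis using True assms spow_pos[of x q] spow_pos[of z q] by linarith
  next
    case False
    show ?thesis
    proof (cases "x \<ge> 0")
      case True
      have "x powr (q-1) \<le> (x-z) powr (q-1)" using True False q by (intro powr_mono2) auto
      moreover have "(-z) powr (q-1) \<le> (x-z) powr (q-1)" using True False q by (intro powr_mono2) auto
      ultimately show ?thesis using False True spow_pos[of x q] spow_negpos[of z q] by simp
    next
      case xn: False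
      have "(-z) powr (q-1) \<le> (-x) powr (q-1) + (x-z) powr (q-1)"
        using powr_subadd[of "-x" "x - z" "q - 1"] xn assms q by simp
      moreover have "0 \<le> (x - z) powr (q - 1)" by simp
      ultimately show ?thesis using xn False spow_negpos[of x q] spow_negpos[of z q] by linarith
    qed
  qed
  then show ?thesis using mono by simp
qed

lemma spow_holder:
  fixes x z q :: real
  assumes "1 < q" "q \<le> 2"
  shows "\<bar>spow q x - spow q z\<bar> \<le> 2 * \<bar>x - z\<bar> powr (q - 1)"
proof (cases "z \<le> x")
  case True then show ?thesis using spow_holder_aux[OF True assms] by simp
next
  case False then show ?thesis using spow_holder_aux[of x z q] assms by (simp add: abs_minus_commute)
qed

lemma powr_split1: "0 \<le> x \<Longrightarrow> x powr a = x * x powr (a - 1)" for x a :: real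
proof (cases "x = 0")
  case False
  assume "0 \<le> x"
  then have "x powr a = x powr (1 + (a - 1))" by simp
  also have "\<dots> = x * x powr (a - 1)" using False \<open>0 \<le> x\<close> by (simp only: powr_add) simp
  finally show ?thesis .
qed simp

lemma spow_lip_pos:
  fixes x z q :: real
  assumes "0 < z" "z < x" "2 \<le> q"
  shows "0 \<le> spow q x - spow q z \<and> spow q x - spow q z \<le> (q - 1) * (\<bar>x\<bar> + \<bar>z\<bar>) powr (q - 2) * (x - z)"
proof -
  have "\<And>t. z \<le> t \<Longrightarrow> t \<le> x \<Longrightarrow> ((\<lambda>t. t powr (q - 1)) has_real_derivative (q - 1) * t powr (q - 1 - 1)) (at t)"
    using assms by (intro has_real_derivative_powr) auto
  from MVT2[OF assms(2) this] obtain \<xi> where xi: "z < \<xi>" "\<xi> < x"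
    "x powr (q - 1) - z powr (q - 1) = (x - z) * ((q - 1) * \<xi> powr (q - 1 - 1))" by blast
  have "\<xi> powr (q - 2) \<le> (\<bar>x\<bar> + \<bar>z\<bar>) powr (q - 2)"
    using xi assms by (intro powr_mono2) auto
  then have "(x - z) * ((q - 1) * \<xi> powr (q - 2)) \<le> (x - z) * ((q - 1) * (\<bar>x\<bar> + \<bar>z\<bar>) powr (q - 2))"
    using assms by (intro mult_left_mono) auto
  moreover have "0 \<le> (x - z) * ((q - 1) * \<xi> powr (q - 2))" using assms by auto
  ultimately show ?thesis using xi assms spow_pos[of x q] spow_pos[of z q]
    by (simp add: algebra_simps)
qed

lemma spow_lip_aux:
  fixes x z q :: real
  assumes "z \<le> x" "2 \<le> q"
  shows "0 \<le> spow q x - spow q z \<and> spow q x - spow q z \<le> (q - 1) * (\<bar>x\<bar> + \<bar>z\<bar>) powr (q - 2) * (x - z)"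
proof (cases "z \<le> 0 \<and> 0 \<le> x")
  case True
  let ?m = "(\<bar>x\<bar> + \<bar>z\<bar>) powr (q - 2)"
  have ex: "x powr (q - 1) = x * x powr (q - 2)" using True powr_split1[of x "q - 1"] by simp
  have ez: "(-z) powr (q - 1) = (-z) * (-z) powr (q - 2)" using True powr_split1[of "-z" "q - 1"] by simp
  have "x powr (q - 2) \<le> ?m" using True assms by (intro powr_mono2) auto
  then have 1: "x * x powr (q - 2) \<le> x * ?m" using True by (intro mult_left_mono) auto
  have "(-z) powr (q - 2) \<le> ?m" using True assms by (intro powr_mono2) auto
  then have 2: "(-z) * (-z) powr (q - 2) \<le> (-z) * ?m" using True by (intro mult_left_mono) auto
  have 3: "(x - z) * ?m \<le> (q - 1) * ?m * (x - z)"
  proof -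
    have "1 * ((x - z) * ?m) \<le> (q - 1) * ((x - z) * ?m)"
      using assms True by (intro mult_right_mono) auto
    then show ?thesis by (simp add: algebra_simps)
  qed
  have 4: "0 \<le> x * x powr (q - 2)" "0 \<le> (-z) * (-z) powr (q - 2)"
    using True mult_nonneg_nonneg[of x "x powr (q-2)"] mult_nonneg_nonneg[of "-z" "(-z) powr (q-2)"] by auto
  have "spow q x - spow q z = x * x powr (q - 2) + (-z) * (-z) powr (q - 2)"
    using True spow_pos[of x q] spow_negpos[of z q] ex ez by simp
  with 1 2 3 4 show ?thesis by (simp add: algebra_simps)
next
  case False
  show ?thesis
  proof (cases "0 < z")
    case True
    show ?thesis
    proof (cases "z = x")
      case False then show ?thesis using spow_lip_pos[of z x q] True assms by simp
    qed simp
  next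
    case zn: False
    with False have xn: "x < 0" by auto
    show ?thesis
    proof (cases "z = x")
      case False
      then have "0 \<le> spow q (-z) - spow q (-x) \<and> spow q (-z) - spow q (-x) \<le> (q - 1) * (\<bar>-z\<bar> + \<bar>-x\<bar>) powr (q - 2) * (-z - -x)"
        using spow_lip_pos[of "-x" "-z" q] xn assms by simp
      then show ?thesis by (simp add: spow_neg add.commute)
    qed simp
  qed
qed

lemma spow_lip:
  fixes x z q :: real
  assumes "2 \<le> q"
  shows "\<bar>spow q x - spow q z\<bar> \<le> (q - 1) * (\<bar>x\<bar> + \<bar>z\<bar>) powr (q - 2) * \<bar>x - z\<bar>"
proof (cases "z \<le> x")
  case True then show ?thesis using spow_lip_aux[OF True assms] by simp
next
  case False then show ?thesis using spow_lip_aux[of x z q] assms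
    by (simp add: abs_minus_commute add.commute)
qed



lemma shell_integrable:
  fixes f :: "'a::euclidean_space \<Rightarrow> real" and c r :: "nat \<Rightarrow> real"
  assumes meas: "f \<in> borel_measurable lborel" and S: "S \<in> sets lborel"
    and nn: "\<And>y. y \<in> S \<Longrightarrow> 0 \<le> f y"
    and c: "\<And>j. 0 \<le> c j" and r: "\<And>j. 0 \<le> r j"
    and summ: "summable (\<lambda>j. c j * r j ^ DIM('a))"
    and bnd: "\<And>y. y \<in> S \<Longrightarrow> \<exists>k. f y \<le> c k \<and> norm y < r k"
  shows "set_integrable lborel S f"
  unfolding set_integrable_def
proof (rule integrableI_bounded)
  show "(\<lambda>x. indicator S x *\<^sub>R f x) \<in> borel_measurable lborel"
    using meas S by measurable
  let ?V = "unit_ball_vol (real DIM('a))"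
  have pt: "ennreal (norm (indicator S y *\<^sub>R f y)) \<le> (\<Sum>j. ennreal (c j) * indicator (ball (0::'a) (r j)) y)" for y
  proof (cases "y \<in> S")
    case True
    then obtain k where k: "f y \<le> c k" "norm y < r k" using bnd by blast
    have "ennreal (norm (indicator S y *\<^sub>R f y)) = ennreal (f y)" using True nn by simp
    also have "\<dots> \<le> ennreal (c k) * indicator (ball 0 (r k)) y" using k by (simp add: ennreal_leI)
    also have "\<dots> \<le> (\<Sum>j. ennreal (c j) * indicator (ball (0::'a) (r j)) y)"
    proof -
      define g where "g = (\<lambda>j. ennreal (c j) * indicator (ball (0::'a) (r j)) y)"
      have "sum g {k} \<le> suminf g" by (rule sum_le_suminf[OF summableI]) auto
      moreover have "sum g {k} = g k" by simp
      ultimately show ?thesis unfolding g_def by simp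
    qed
    finally show ?thesis .
  qed (simp)
  have "(\<integral>\<^sup>+x. norm (indicator S x *\<^sub>R f x) \<partial>lborel) \<le> (\<integral>\<^sup>+y. (\<Sum>j. ennreal (c j) * indicator (ball (0::'a) (r j)) y) \<partial>lborel)"
    apply (rule nn_integral_mono) using pt by blast
  also have "\<dots> = (\<Sum>j. \<integral>\<^sup>+y. ennreal (c j) * indicator (ball (0::'a) (r j)) y \<partial>lborel)"
    by (rule nn_integral_suminf) (intro borel_measurable_times_ennreal borel_measurable_const borel_measurable_indicator, simp)
  also have "\<dots> = (\<Sum>j. ennreal (c j * (?V * r j ^ DIM('a))))"
    using r by (simp add: nn_integral_cmult_indicator emeasure_ball ennreal_mult' c)
  also have "\<dots> = ennreal (\<Sum>j. c j * (?V * r j ^ DIM('a)))"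
    using summ c r by (intro suminf_ennreal2) (auto simp: summable_mult2 mult.left_commute[of _ ?V] intro!: summable_mult)
  also have "\<dots> < \<infinity>" by simp
  finally show "(\<integral>\<^sup>+x. norm (indicator S x *\<^sub>R f x) \<partial>lborel) < \<infinity>" .
qed



lemma two_pow_powr: "((2::real)^j) powr a = (2 powr a)^j"
  by (simp add: powr_realpow[symmetric] powr_powr mult.commute)

lemma half_powr_aux: "0 < t \<Longrightarrow> (t / 2) powr a * t ^ n = (2::real) powr (- a) * t powr (a + real n)"
  by (simp add: divide_powr_uminus powr_add powr_divide powr_realpow)

lemma exists_shell_down:
  fixes R t :: real
  assumes "0 < t" "t < R"
  shows "\<exists>k. R / 2 ^ (Suc k) \<le> t \<and> t < R / 2 ^ k"
proof -
  obtain j where j: "R / t < 2 ^ j" using real_arch_pow[of 2 "R / t"] by auto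
  then have ex: "\<exists>j. R / 2 ^ j \<le> t" using assms
    by (intro exI[of _ j]) (simp add: field_simps)
  define m where "m = (LEAST j. R / 2 ^ j \<le> t)"
  have m: "R / 2 ^ m \<le> t" unfolding m_def by (rule LeastI_ex[OF ex])
  have m0: "m \<noteq> 0" using m assms by (cases m) auto
  then obtain k where k: "m = Suc k" by (cases m) auto
  have "\<not> R / 2 ^ k \<le> t" using k unfolding m_def
    using not_less_Least[of k "\<lambda>j. R / 2 ^ j \<le> t"] by simp
  then show ?thesis using m k by auto
qed

lemma exists_shell_up:
  fixes R t :: real
  assumes "0 < R" "R \<le> t"
  shows "\<exists>k. R * 2 ^ k \<le> t \<and> t < R * 2 ^ (Suc k)"
proof -
  obtain j where j: "t / R < 2 ^ j" using real_arch_pow[of 2 "t / R"] by auto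
  then have ex: "\<exists>j. t < R * 2 ^ Suc j" using assms
    by (intro exI[of _ j]) (simp add: field_simps)
  define m where "m = (LEAST j. t < R * 2 ^ Suc j)"
  have m: "t < R * 2 ^ Suc m" unfolding m_def by (rule LeastI_ex[OF ex])
  have "R * 2 ^ m \<le> t"
  proof (cases m)
    case 0 then show ?thesis using assms by simp
  next
    case (Suc k)
    have "\<not> t < R * 2 ^ Suc k" using Suc unfolding m_def
      using not_less_Least[of k "\<lambda>j. t < R * 2 ^ Suc j"] by simp
    then show ?thesis using Suc by simp
  qed
  then show ?thesis using m by auto
qed

lemma near0_integrable:
  fixes \<beta> R :: real
  assumes "0 < \<beta>" "0 < R"
  shows "set_integrable lborel (ball (0::'a::euclidean_space) R) (\<lambda>y. norm y powr (\<beta> - real DIM('a)))"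
proof -
  let ?n = "real DIM('a)"
  define r where "r j = R / 2 ^ j" for j :: nat
  define c where "c j = (r j / 2) powr (\<beta> - ?n) + r j powr (\<beta> - ?n)" for j
  have rpos: "0 < r j" for j using assms by (simp add: r_def)
  have eq: "c j * r j ^ DIM('a) = (2 powr (?n - \<beta>) + 1) * R powr \<beta> * ((2 powr (- \<beta>)) ^ j)" for j
  proof -
    have "c j * r j ^ DIM('a) = 2 powr (?n - \<beta>) * r j powr \<beta> + r j powr \<beta>"
      using half_powr_aux[OF rpos[of j], of "\<beta> - ?n" "DIM('a)"] rpos[of j]
      by (simp add: c_def distrib_right powr_realpow[symmetric] powr_add[symmetric])
    also have "r j powr \<beta> = R powr \<beta> * (2 powr (- \<beta>)) ^ j"
      using assms by (simp add: r_def powr_divide two_pow_powr powr_minus_divide power_one_over)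
    finally show ?thesis by (simp add: algebra_simps)
  qed
  show ?thesis
  proof (rule shell_integrable[where c = c and r = r])
    show "summable (\<lambda>j. c j * r j ^ DIM('a))"
      unfolding eq using powr_less_mono[of 0 \<beta> 2] assms
      by (intro summable_mult summable_geometric) (simp add: powr_minus_divide)
    show "0 \<le> c j" "0 \<le> r j" for j using rpos[of j] by (auto simp: c_def)
    show "(\<lambda>y. norm y powr (\<beta> - ?n)) \<in> borel_measurable lborel" by measurable
    show "ball 0 R \<in> sets lborel" by simp
    show "0 \<le> norm y powr (\<beta> - ?n)" for y :: 'a by simp
    fix y :: 'a assume y: "y \<in> ball 0 R"
    show "\<exists>k. norm y powr (\<beta> - ?n) \<le> c k \<and> norm y < r k"
    proof (cases "y = 0")
      case True then show ?thesis using assms rpos[of 0] by (intro exI[of _ 0]) (auto simp: c_def r_def)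
    next
      case False
      then obtain k where k: "R / 2 ^ Suc k \<le> norm y" "norm y < R / 2 ^ k"
        using exists_shell_down[of "norm y" R] y by auto
      have "norm y powr (\<beta> - ?n) \<le> c k"
      proof (cases "0 \<le> \<beta> - ?n")
        case True
        have "norm y powr (\<beta> - ?n) \<le> r k powr (\<beta> - ?n)"
          using True k by (intro powr_mono2) (auto simp: r_def)
        moreover have "0 \<le> (r k / 2) powr (\<beta> - ?n)" by simp
        ultimately show ?thesis unfolding c_def by linarith
      next
        case False
        have "norm y powr (\<beta> - ?n) \<le> (r k / 2) powr (\<beta> - ?n)"
          using False k assms by (intro powr_mono2') (auto simp: r_def)
        moreover have "0 \<le> r k powr (\<beta> - ?n)" by simp
        ultimately show ?thesis unfolding c_def by linarith
      qed
      then show ?thesis using k by (auto simp: r_def)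
    qed
  qed
qed

lemma tail_integrable:
  fixes \<gamma> R :: real
  assumes "0 < \<gamma>" "0 < R"
  shows "set_integrable lborel (- ball (0::'a::euclidean_space) R) (\<lambda>y. norm y powr (- real DIM('a) - \<gamma>))"
proof -
  let ?n = "real DIM('a)"
  define r where "r j = R * 2 ^ Suc j" for j :: nat
  define c where "c j = (R * 2 ^ j) powr (- ?n - \<gamma>)" for j
  have eq: "c j * r j ^ DIM('a) = 2 ^ DIM('a) * R powr (- \<gamma>) * ((2 powr (- \<gamma>)) ^ j)" for j
  proof -
    have p: "0 < R * 2 ^ j" using assms by simp
    have "c j * r j ^ DIM('a) = (R * 2 ^ j) powr (- ?n - \<gamma>) * ((R * 2 ^ j) powr ?n * 2 ^ DIM('a))"
      using p by (simp add: c_def r_def powr_realpow power_mult_distrib mult_ac)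
    also have "\<dots> = 2 ^ DIM('a) * (R * 2 ^ j) powr (- \<gamma>)"
      using p by (simp add: powr_add[symmetric] mult_ac)
    also have "(R * 2 ^ j) powr (- \<gamma>) = R powr (- \<gamma>) * (2 powr (- \<gamma>)) ^ j"
      using assms by (simp add: powr_mult two_pow_powr)
    finally show ?thesis by (simp add: algebra_simps)
  qed
  show ?thesis
  proof (rule shell_integrable[where c = c and r = r])
    show "summable (\<lambda>j. c j * r j ^ DIM('a))"
      unfolding eq using powr_less_mono[of 0 \<gamma> 2] assms
      by (intro summable_mult summable_geometric) (simp add: powr_minus_divide)
    show "0 \<le> c j" "0 \<le> r j" for j using assms by (auto simp: c_def r_def)
    show "(\<lambda>y. norm y powr (- ?n - \<gamma>)) \<in> borel_measurable lborel" by measurable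
    show "- ball 0 R \<in> sets lborel" by simp
    show "0 \<le> norm y powr (- ?n - \<gamma>)" for y :: 'a by simp
    fix y :: 'a assume y: "y \<in> - ball 0 R"
    then obtain k where k: "R * 2 ^ k \<le> norm y" "norm y < R * 2 ^ Suc k"
      using exists_shell_up[of R "norm y"] assms by auto
    have "norm y powr (- ?n - \<gamma>) \<le> c k"
      unfolding c_def using k assms by (intro powr_mono2') auto
    then show "\<exists>k. norm y powr (- ?n - \<gamma>) \<le> c k \<and> norm y < r k" using k by (auto simp: r_def)
  qed
qed



lemma deriv_line:
  fixes \<phi> :: "'a::euclidean_space \<Rightarrow> real"
  assumes "(\<phi> has_derivative blinfun_apply Dp) (at (x0 + t *\<^sub>R y))"
  shows "((\<lambda>t. \<phi> (x0 + t *\<^sub>R y)) has_real_derivative blinfun_apply Dp y) (at t)"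
proof -
  have l: "((\<lambda>t. x0 + t *\<^sub>R y) has_derivative (\<lambda>h. h *\<^sub>R y)) (at t)"
    by (auto intro!: derivative_eq_intros)
  have "((\<lambda>t. \<phi> (x0 + t *\<^sub>R y)) has_derivative (\<lambda>h. blinfun_apply Dp (h *\<^sub>R y))) (at t)"
    using has_derivative_compose[OF l assms] by (simp add: o_def)
  moreover have "(\<lambda>h. blinfun_apply Dp (h *\<^sub>R y)) = (*) (blinfun_apply Dp y)"
    by (auto simp: blinfun.scaleR_right)
  ultimately show ?thesis by (simp add: has_field_derivative_def)
qed

lemma c2_est:
  fixes \<phi> :: "'a::euclidean_space \<Rightarrow> real"
  assumes c2: "C2_on (ball x0 r) \<phi>" and r: "0 < r"
  shows "\<exists>\<rho>0>0. \<exists>B L. \<forall>y. norm y < \<rho>0 \<longrightarrow>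
     \<bar>\<phi> (x0 + y) - \<phi> x0\<bar> \<le> B * norm y \<and> \<bar>\<phi> (x0 + y) + \<phi> (x0 - y) - 2 * \<phi> x0\<bar> \<le> L * (norm y)\<^sup>2"
proof -
  obtain D D2 where D: "\<forall>x\<in>ball x0 r. (\<phi> has_derivative blinfun_apply (D x)) (at x)"
    and D2: "\<forall>x\<in>ball x0 r. (D has_derivative blinfun_apply (D2 x)) (at x)"
    and cD2: "continuous_on (ball x0 r) D2"
    using c2 unfolding C2_on_def by blast
  define S where "S = cball x0 (r/2)"
  have SS: "S \<subseteq> ball x0 r" using r by (auto simp: S_def)
  have "compact (D2 ` S)"
    by (intro compact_continuous_image continuous_on_subset[OF cD2 SS]) (simp add: S_def)
  then obtain L1 where L1: "\<And>x. x \<in> S \<Longrightarrow> norm (D2 x) \<le> L1"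
    using compact_imp_bounded[of "D2 ` S"] by (auto simp: bounded_iff)
  have x0S: "x0 \<in> S" using r by (simp add: S_def)
  have L1pos: "0 \<le> L1" using L1[OF x0S] norm_ge_zero order_trans by blast
  have lipD: "norm (D x - D z) \<le> L1 * norm (x - z)" if "x \<in> S" "z \<in> S" for x z
  proof (rule differentiable_bound[of S D "\<lambda>x. blinfun_apply (D2 x)" L1])
    show "convex S" by (simp add: S_def)
    show "(D has_derivative blinfun_apply (D2 x)) (at x within S)" if "x \<in> S" for x
      using D2 SS that by (auto intro: has_derivative_at_withinI)
    show "onorm (blinfun_apply (D2 x)) \<le> L1" if "x \<in> S" for x
      using L1[OF that] by (simp add: norm_blinfun.rep_eq)
  qed (use that in auto)
  define B where "B = norm (D x0) + L1 * r"
  have bD: "norm (D x) \<le> B" if "x \<in> S" for x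
  proof -
    have "norm (D x) \<le> norm (D x0) + norm (D x - D x0)" by (rule norm_triangle_sub)
    also have "\<dots> \<le> norm (D x0) + L1 * norm (x - x0)" using lipD[OF that x0S] by simp
    also have "L1 * norm (x - x0) \<le> L1 * r" using that r L1pos
      by (intro mult_left_mono) (auto simp: S_def dist_norm norm_minus_commute)
    finally show ?thesis by (simp add: B_def)
  qed
  show ?thesis
  proof (intro exI conjI allI impI)
    show "0 < r / 2" using r by simp
    fix y :: 'a assume y: "norm y < r / 2"
    have yS: "x0 + y \<in> S" using y by (simp add: S_def dist_norm)
    have "norm (\<phi> (x0 + y) - \<phi> x0) \<le> B * norm ((x0 + y) - x0)"
    proof (rule differentiable_bound[of S \<phi> "\<lambda>x. blinfun_apply (D x)" B])
      show "convex S" by (simp add: S_def)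
      show "(\<phi> has_derivative blinfun_apply (D x)) (at x within S)" if "x \<in> S" for x
        using D SS that by (auto intro: has_derivative_at_withinI)
      show "onorm (blinfun_apply (D x)) \<le> B" if "x \<in> S" for x
        using bD[OF that] by (simp add: norm_blinfun.rep_eq)
    qed (use yS x0S in auto)
    then show "\<bar>\<phi> (x0 + y) - \<phi> x0\<bar> \<le> B * norm y" by simp
    define g where "g t = \<phi> (x0 + t *\<^sub>R y) + \<phi> (x0 + t *\<^sub>R (- y))" for t
    have inS: "x0 + t *\<^sub>R y \<in> S" "x0 + t *\<^sub>R (-y) \<in> S" if "0 \<le> t" "t \<le> 1" for t
    proof -
      have "norm (t *\<^sub>R y) \<le> norm y" using that by (simp add: mult_left_le_one_le)
      then show "x0 + t *\<^sub>R y \<in> S" "x0 + t *\<^sub>R (-y) \<in> S" using y by (auto simp: S_def dist_norm)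
    qed
    have dg: "(g has_real_derivative (blinfun_apply (D (x0 + t *\<^sub>R y)) y + blinfun_apply (D (x0 + t *\<^sub>R (-y))) (-y))) (at t)"
      if "0 \<le> t" "t \<le> 1" for t
      unfolding g_def
      using inS[OF that] SS D
      by (intro DERIV_add deriv_line) auto
    obtain \<xi> where xi: "0 < \<xi>" "\<xi> < 1"
      "g 1 - g 0 = (1 - 0) * (blinfun_apply (D (x0 + \<xi> *\<^sub>R y)) y + blinfun_apply (D (x0 + \<xi> *\<^sub>R (-y))) (-y))"
      using MVT2[of 0 1 g, OF _ dg] by auto
    have "\<bar>g 1 - g 0\<bar> = \<bar>blinfun_apply (D (x0 + \<xi> *\<^sub>R y) - D (x0 + \<xi> *\<^sub>R (-y))) y\<bar>"
      using xi by (simp add: blinfun.diff_left blinfun.minus_right)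
    also have "\<dots> \<le> norm (D (x0 + \<xi> *\<^sub>R y) - D (x0 + \<xi> *\<^sub>R (-y))) * norm y"
      using norm_blinfun[of _ y] by (metis real_norm_def)
    also have "\<dots> \<le> (L1 * norm ((x0 + \<xi> *\<^sub>R y) - (x0 + \<xi> *\<^sub>R (-y)))) * norm y"
      using xi inS[of \<xi>] by (intro mult_right_mono lipD) auto
    also have "norm ((x0 + \<xi> *\<^sub>R y) - (x0 + \<xi> *\<^sub>R (-y))) = 2 * \<xi> * norm y"
    proof -
      have "(x0 + \<xi> *\<^sub>R y) - (x0 + \<xi> *\<^sub>R (-y)) = (2 * \<xi>) *\<^sub>R y" by (simp add: algebra_simps scaleR_2 scaleR_left_distrib[symmetric])
      then show ?thesis using xi by simp
    qed
    also have "L1 * (2 * \<xi> * norm y) * norm y \<le> (2 * L1) * (norm y)\<^sup>2"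
    proof -
      have "L1 * (2 * \<xi> * norm y) * norm y = (2 * L1) * (norm y)\<^sup>2 * \<xi>" by (simp add: power2_eq_square)
      also have "\<dots> \<le> (2 * L1) * (norm y)\<^sup>2 * 1" using xi L1pos by (intro mult_left_mono) auto
      finally show ?thesis by simp
    qed
    finally have "\<bar>g 1 - g 0\<bar> \<le> (2 * L1) * (norm y)\<^sup>2" .
    then show "\<bar>\<phi> (x0 + y) + \<phi> (x0 - y) - 2 * \<phi> x0\<bar> \<le> (2 * L1) * (norm y)\<^sup>2"
      by (simp add: g_def)
  qed
qed



lemma spow_sum_bound:
  fixes a b P B L t :: real
  assumes P: "1 < P" and B: "0 \<le> B" and L: "0 \<le> L" and t: "0 < t"
    and a: "\<bar>a\<bar> \<le> B * t" and b: "\<bar>b\<bar> \<le> B * t" and ab: "\<bar>a + b\<bar> \<le> L * t\<^sup>2"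
  shows "\<bar>spow P a + spow P b\<bar> \<le>
    (if P \<le> 2 then 2 * L powr (P - 1) else (P - 1) * (2 * B) powr (P - 2) * L) *
      t powr (if P \<le> 2 then 2 * P - 2 else P)"
proof -
  have e: "spow P a + spow P b = spow P a - spow P (-b)" by (simp add: spow_neg)
  have t2: "t\<^sup>2 = t powr 2" using t by simp
  show ?thesis
  proof (cases "P \<le> 2")
    case True
    have "\<bar>spow P a - spow P (-b)\<bar> \<le> 2 * \<bar>a - - b\<bar> powr (P - 1)"
      by (rule spow_holder) (use P True in auto)
    also have "\<bar>a - - b\<bar> powr (P - 1) \<le> (L * t\<^sup>2) powr (P - 1)"
      using ab P by (intro powr_mono2) auto
    also have "(L * t\<^sup>2) powr (P - 1) = L powr (P - 1) * t powr (2 * P - 2)"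
    proof -
      have "(L * t\<^sup>2) powr (P - 1) = L powr (P - 1) * (t powr 2) powr (P - 1)"
        using t L by (simp only: t2 powr_mult)
      also have "(t powr 2) powr (P - 1) = t powr (2 * P - 2)"
        by (simp only: powr_powr) (simp add: algebra_simps)
      finally show ?thesis .
    qed
    finally show ?thesis using True e by (simp add: mult.assoc)
  next
    case False
    have "\<bar>spow P a - spow P (-b)\<bar> \<le> (P - 1) * (\<bar>a\<bar> + \<bar>-b\<bar>) powr (P - 2) * \<bar>a - - b\<bar>"
      by (rule spow_lip) (use False in auto)
    also have "\<dots> \<le> (P - 1) * (2 * B * t) powr (P - 2) * (L * t\<^sup>2)"
    proof -
      have 1: "(\<bar>a\<bar> + \<bar>- b\<bar>) powr (P - 2) \<le> (2 * B * t) powr (P - 2)"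
        using a b False by (intro powr_mono2) auto
      have 2: "\<bar>a - - b\<bar> \<le> L * t\<^sup>2" using ab by simp
      have 3: "(P - 1) * (\<bar>a\<bar> + \<bar>-b\<bar>) powr (P - 2) \<le> (P - 1) * (2 * B * t) powr (P - 2)"
        using 1 P by (intro mult_left_mono) auto
      show ?thesis
        by (rule mult_mono[OF 3 2]) (use P in auto)
    qed
    also have "(P - 1) * (2 * B * t) powr (P - 2) * (L * t\<^sup>2) = (P - 1) * (2 * B) powr (P - 2) * L * (t powr (P - 2) * t powr 2)"
    proof -
      have "(2 * B * t) powr (P - 2) = (2 * B) powr (P - 2) * t powr (P - 2)"
        by (rule powr_mult)
      then show ?thesis by (simp only: t2 mult_ac)
    qed
    also have "t powr (P - 2) * t powr 2 = t powr P" by (simp only: powr_add[symmetric] diff_add_cancel)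
    finally show ?thesis using False e by (simp add: mult.assoc)
  qed
qed



lemma spow_mono:
  fixes x z q :: real
  assumes "z \<le> x" "1 < q"
  shows "spow q z \<le> spow q x"
proof (cases "z \<ge> 0")
  case True then show ?thesis using assms spow_pos[of z q] spow_pos[of x q] by (simp add: powr_mono2)
next
  case False
  show ?thesis
  proof (cases "x \<ge> 0")
    case True
    have "0 \<le> (-z) powr (q-1)" "0 \<le> x powr (q-1)" by auto
    then show ?thesis using False True spow_pos[of x q] spow_negpos[of z q] by linarith
  next
    case False
    then show ?thesis using \<open>\<not> z \<ge> 0\<close> spow_negpos[of x q] spow_negpos[of z q] assms
      by (simp add: powr_mono2)
  qed
qed

lemma spow_abs: "\<bar>spow q t\<bar> = \<bar>t\<bar> powr (q - 1)"
proof (cases "t \<ge> 0")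
  case True then show ?thesis using spow_pos[of t q] by simp
next
  case False then show ?thesis using spow_negpos[of t q] by simp
qed

lemma spow_zero[simp]: "spow q 0 = 0" by (simp add: spow_def)

lemma spow_meas[measurable]: "spow q \<in> borel_measurable borel"
  unfolding spow_def[abs_def] by measurable

lemma distr_uminus_lborel: "distr lborel borel uminus = (lborel :: 'a::euclidean_space measure)"
proof -
  have e: "(\<lambda>x::'a. 0 + (-1) *\<^sub>R x) = uminus" by auto
  show ?thesis using lborel_affine[of "-1" "0::'a"] unfolding e by (simp add: density_1)
qed

lemma reflect_integral:
  fixes F :: "'a::euclidean_space \<Rightarrow> real"
  assumes "integrable lborel F"
  shows "integrable lborel (\<lambda>y. F (- y))" "integral\<^sup>L lborel (\<lambda>y. F (- y)) = integral\<^sup>L lborel F"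
proof -
  have m: "F \<in> borel_measurable borel" using assms by auto
  have u: "uminus \<in> measurable lborel (borel :: 'a measure)" by simp
  show "integrable lborel (\<lambda>y. F (- y))"
    using integrable_distr_eq[OF u m] assms unfolding distr_uminus_lborel by simp
  show "integral\<^sup>L lborel (\<lambda>y. F (- y)) = integral\<^sup>L lborel F"
    using integral_distr[OF u m] unfolding distr_uminus_lborel by simp
qed

lemma trunc_tendsto:
  fixes F :: "'a::euclidean_space \<Rightarrow> real"
  assumes F: "integrable lborel F" and F0: "F 0 = 0"
  shows "((\<lambda>\<epsilon>. set_lebesgue_integral lborel (- ball 0 \<epsilon>) F) \<longlongrightarrow> integral\<^sup>L lborel F) (at_right 0)"
proof -
  have "((\<lambda>t. integral\<^sup>L lborel (\<lambda>y. indicator (- ball 0 (inverse t)) y *\<^sub>R F y)) \<longlongrightarrow> integral\<^sup>L lborel F) at_top"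
  proof (rule integral_dominated_convergence_at_top[where w = "\<lambda>y. norm (F y)"])
    show "F \<in> borel_measurable lborel" using F by auto
    show "(\<lambda>y. indicator (- ball 0 (inverse t)) y *\<^sub>R F y) \<in> borel_measurable lborel" for t
      using F by (intro borel_measurable_scaleR) auto
    show "integrable lborel (\<lambda>y. norm (F y))" using F by auto
    show "AE y in lborel. ((\<lambda>t. indicator (- ball 0 (inverse t)) y *\<^sub>R F y) \<longlongrightarrow> F y) at_top"
    proof (rule AE_I2)
      fix y :: 'a
      show "((\<lambda>t. indicator (- ball 0 (inverse t)) y *\<^sub>R F y) \<longlongrightarrow> F y) at_top"
      proof (cases "y = 0")
        case True then show ?thesis using F0 by simp
      next
        case False
        have "eventually (\<lambda>t. t > inverse (norm y)) at_top" by (rule eventually_gt_at_top)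
        then have "eventually (\<lambda>t. indicator (- ball 0 (inverse t)) y *\<^sub>R F y = F y) at_top"
        proof (rule eventually_mono)
          fix t assume t: "inverse (norm y) < t"
          have "0 < inverse (norm y)" using False by simp
          then have "inverse t < norm y" using t False
            by (metis inverse_inverse_eq inverse_less_iff_less order.strict_trans)
          then show "indicator (- ball 0 (inverse t)) y *\<^sub>R F y = F y" by simp
        qed
        then show ?thesis by (rule tendsto_eventually)
      qed
    qed
    show "\<forall>\<^sub>F t in at_top. AE y in lborel. norm (indicator (- ball 0 (inverse t)) y *\<^sub>R F y) \<le> norm (F y)"
      by (auto simp: indicator_def)
  qed
  then show ?thesis
    unfolding at_right_to_top filterlim_filtermap set_lebesgue_integral_def by simp
qed

lemma delta_trunc_eq:
  fixes v :: "'a::euclidean_space \<Rightarrow> real"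
  assumes int: "set_integrable lborel (- ball 0 e) (Lintegrand p K v x0)"
    and sym: "\<And>y. K x0 (- y) = K x0 y"
  shows "set_integrable lborel (- ball 0 e) (\<lambda>y. delta p v x0 y * K x0 y)"
    "set_lebesgue_integral lborel (- ball 0 e) (\<lambda>y. delta p v x0 y * K x0 y) =
     set_lebesgue_integral lborel (- ball 0 e) (Lintegrand p K v x0)"
proof -
  define F where "F y = indicator (- ball 0 e) y * Lintegrand p K v x0 y" for y
  have F: "integrable lborel F" using int unfolding set_integrable_def F_def by simp
  have ind: "indicator (- ball 0 e) (- y) = (indicator (- ball (0::'a) e) y :: real)" for y
    by (simp add: indicator_def)
  have eq: "indicator (- ball 0 e) y * (delta p v x0 y * K x0 y) = F y / 2 + F (- y) / 2" for y
    unfolding F_def Lintegrand_def delta_def ind using sym[of y] by (simp add: algebra_simps)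
  have R: "integrable lborel (\<lambda>y. F (- y))" "integral\<^sup>L lborel (\<lambda>y. F (- y)) = integral\<^sup>L lborel F"
    using reflect_integral[OF F] by auto
  have i2: "integrable lborel (\<lambda>y. F y / 2 + F (- y) / 2)" using F R by auto
  then show "set_integrable lborel (- ball 0 e) (\<lambda>y. delta p v x0 y * K x0 y)"
    unfolding set_integrable_def using eq by simp
  have "set_lebesgue_integral lborel (- ball 0 e) (\<lambda>y. delta p v x0 y * K x0 y) = integral\<^sup>L lborel (\<lambda>y. F y / 2 + F (- y) / 2)"
    unfolding set_lebesgue_integral_def using eq by simp
  also have "\<dots> = integral\<^sup>L lborel F" using F R by simp
  finally show "set_lebesgue_integral lborel (- ball 0 e) (\<lambda>y. delta p v x0 y * K x0 y) =
     set_lebesgue_integral lborel (- ball 0 e) (Lintegrand p K v x0)"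
    unfolding set_lebesgue_integral_def F_def by simp
qed



lemma C2_on_subset: "T \<subseteq> S \<Longrightarrow> C2_on S \<phi> \<Longrightarrow> C2_on T \<phi>"
  unfolding C2_on_def by (meson continuous_on_subset subsetD)

lemma C2_on_cont: "C2_on S \<phi> \<Longrightarrow> continuous_on S \<phi>"
  unfolding C2_on_def
  by (metis continuous_at_imp_continuous_on has_derivative_continuous)

lemma deltaK_meas:
  fixes v :: "'a::euclidean_space \<Rightarrow> real"
  assumes [measurable]: "v \<in> borel_measurable borel" "K x0 \<in> borel_measurable borel"
  shows "(\<lambda>y. delta p v x0 y * K x0 y) \<in> borel_measurable borel"
  unfolding delta_def by measurable

lemma Lint_meas:
  fixes v :: "'a::euclidean_space \<Rightarrow> real"
  assumes [measurable]: "v \<in> borel_measurable borel" "K x0 \<in> borel_measurable borel"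
  shows "Lintegrand p K v x0 \<in> borel_measurable borel"
  unfolding Lintegrand_def[abs_def] by measurable

lemma delta_at0[simp]: "delta p v x0 0 = 0"
  by (simp add: delta_def)



theorem proposition2p2:
  fixes s p :: "'a::euclidean_space \<Rightarrow> real" and K :: "'a \<Rightarrow> 'a \<Rightarrow> real"
    and u \<phi> :: "'a \<Rightarrow> real" and x0 :: 'a
    and lam Lam M \<gamma> C r :: real
  assumes "admissible_sp s p"
    and "admissible_kernel s p K lam Lam M \<gamma>"
    and "visc_sub p K u C (ball 0 1)"
    and "x0 \<in> ball 0 1" and "r > 0" and "ball x0 r \<subseteq> ball 0 1"
    and "C2_on (ball x0 r) \<phi>" and "\<phi> x0 = u x0" and "\<forall>x\<in>ball x0 r. \<phi> x \<ge> u x"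
  shows "integrable lborel (\<lambda>y. delta p u x0 y * K x0 y) \<and>
         PV_has_value p K u x0 (\<integral>y. delta p u x0 y * K x0 y \<partial>lborel) \<and>
         (\<integral>y. delta p u x0 y * K x0 y \<partial>lborel) \<le> C"
proof -
  let ?n = "real DIM('a)"
  define P where "P = p x0"
  define \<sigma> where "\<sigma> = s x0"
  define k where "k = K x0"
  have x02: "x0 \<in> ball 0 2" using assms(4) by simp
  have sp: "0 < \<sigma> \<and> \<sigma> < 1 \<and> 1 < P \<and> (P < 2 \<longrightarrow> P * (1 - \<sigma>) > 1)"
    using assms(1) unfolding admissible_sp_def
  proof (elim disjE exE conjE)
    fix s' p' assume h: "s = (\<lambda>_. s')" "p = (\<lambda>_. p')" "0 < s'" "s' < 1" "1 < p'"
      "p' < 2 \<longrightarrow> 1 / (1 - s') < p'"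
    have "p' < 2 \<longrightarrow> p' * (1 - s') > 1"
      using h(4,6) by (auto simp: divide_less_eq mult.commute)
    then show ?thesis using h by (simp add: \<sigma>_def P_def)
  next
    fix s0 s1 p0 p1 \<tau> assume h: "0 < s0" "s1 < 1" "1 < p0" "0 < \<tau>"
      "\<forall>x\<in>ball 0 2. s0 < s x \<and> s x < s1 \<and> p0 < p x \<and> p x < p1 \<and> (p x < 2 \<longrightarrow> p x * (1 - s x) - 1 > \<tau>)"
    from h(5) x02 have "s0 < s x0" "s x0 < s1" "p0 < p x0" "p x0 < 2 \<longrightarrow> p x0 * (1 - s x0) - 1 > \<tau>"
      by auto
    then show ?thesis using h(1-4) unfolding \<sigma>_def P_def by auto
  qed
  have \<sigma>0: "0 < \<sigma>" and \<sigma>1: "\<sigma> < 1" and P1: "1 < P" and P2: "P < 2 \<Longrightarrow> P * (1 - \<sigma>) > 1"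
    using sp by auto
  have sP: "0 < \<sigma> * P" using \<sigma>0 P1 by simp
  have expneg: "- ?n - \<sigma> * P \<le> 0" using sP by (simp add: add_nonneg_pos less_imp_le)
  from assms(2) have lam: "0 < lam" "lam \<le> Lam" and Mpos: "0 < M" and gpos: "0 < \<gamma>"
    and kmeas0: "(\<lambda>z. if fst z \<in> ball 0 2 then K (fst z) (snd z) else 0) \<in> borel_measurable (lborel \<Otimes>\<^sub>M lborel)"
    and ksym0: "\<forall>x\<in>ball 0 2. \<forall>y. K x y \<ge> 0 \<and> K x y = K x (- y)"
    and kb0: "\<forall>x\<in>ball 0 2. \<forall>y\<in>ball 0 2.
        lam * norm y powr (- ?n - s x * p x) \<le> K x y \<and> K x y \<le> Lam * norm y powr (- ?n - s x * p x)"
    and kt0: "\<forall>x\<in>ball 0 2. \<forall>y. y \<notin> ball 0 (1/4) \<longrightarrow> K x y \<le> M * norm y powr (- ?n - \<gamma>)"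
    unfolding admissible_kernel_def by blast+
  have kpos: "0 \<le> k y" for y using ksym0 x02 unfolding k_def by blast
  have ksym: "K x0 (- y) = K x0 y" for y using ksym0 x02 by metis
  have kup: "k y \<le> Lam * norm y powr (- ?n - \<sigma> * P)" if "y \<in> ball 0 2" for y
    using kb0 x02 that unfolding k_def \<sigma>_def P_def by blast
  have ktail: "k y \<le> M * norm y powr (- ?n - \<gamma>)" if "y \<notin> ball 0 (1/4)" for y
    using kt0 x02 that unfolding k_def by blast
  have Lam0: "0 \<le> Lam" using lam by simp
  have kmeas: "k \<in> borel_measurable borel"
  proof -
    have "(\<lambda>y. (\<lambda>z. if fst z \<in> ball 0 2 then K (fst z) (snd z) else 0) (x0, y)) \<in> borel_measurable lborel"
      by (rule measurable_Pair2[OF kmeas0]) simp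
    then show ?thesis using x02 by (simp add: k_def)
  qed
  have kmeas': "K x0 \<in> borel_measurable borel" using kmeas by (simp add: k_def)
  have kint: "set_integrable lborel (- ball 0 e) k" if e: "0 < e" for e
  proof -
    define h where "h y = Lam * e powr (- ?n - \<sigma> * P) * indicator (ball 0 2) y
       + M * (indicator (- ball 0 2) y *\<^sub>R norm y powr (- ?n - \<gamma>))" for y :: 'a
    have hint: "integrable lborel h"
    proof -
      have i1: "integrable lborel (\<lambda>y. indicator (- ball (0::'a) 2) y *\<^sub>R norm y powr (- ?n - \<gamma>))"
        using tail_integrable[OF gpos, of 2] unfolding set_integrable_def by simp
      have i2: "integrable lborel (indicator (ball (0::'a) 2) :: 'a \<Rightarrow> real)"
        using emeasure_lborel_ball_finite[of "0::'a" 2] by (intro integrable_real_indicator) auto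
      have "h = (\<lambda>y. Lam * e powr (- ?n - \<sigma> * P) * indicator (ball 0 2) y
       + M * (indicator (- ball 0 2) y *\<^sub>R norm y powr (- ?n - \<gamma>)))" by (simp add: h_def[abs_def])
      then show ?thesis using Bochner_Integration.integrable_add[OF integrable_mult_right[OF i2] integrable_mult_right[OF i1]] by simp
    qed
    have hnn: "0 \<le> h y" for y using Lam0 Mpos by (auto simp: h_def indicator_def)
    show ?thesis unfolding set_integrable_def
    proof (rule Bochner_Integration.integrable_bound[OF hint])
      show "(\<lambda>y. indicator (- ball 0 e) y *\<^sub>R k y) \<in> borel_measurable lborel"
        using kmeas by simp
      show "AE y in lborel. norm (indicator (- ball 0 e) y *\<^sub>R k y) \<le> norm (h y)"
      proof (rule AE_I2)
        fix y :: 'a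
        show "norm (indicator (- ball 0 e) y *\<^sub>R k y) \<le> norm (h y)"
        proof (cases "y \<in> ball 0 e")
          case True then show ?thesis by simp
        next
          case ye: False
          show ?thesis
          proof (cases "y \<in> ball 0 2")
            case True
            have "k y \<le> Lam * norm y powr (- ?n - \<sigma> * P)" using kup[OF True] .
            also have "\<dots> \<le> Lam * e powr (- ?n - \<sigma> * P)"
              using ye e \<sigma>0 P1 Lam0 expneg by (intro mult_left_mono powr_mono2') auto
            finally show ?thesis using ye True kpos[of y] hnn[of y] by (simp add: h_def)
          next
            case False
            then have "y \<notin> ball 0 (1/4)" by auto
            then show ?thesis using ye False ktail[of y] kpos[of y] hnn[of y] by (simp add: h_def)
          qed
        qed
      qed
    qed
  qed
  obtain N where N: "\<And>z. \<bar>u z\<bar> \<le> N"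
    using assms(3) unfolding visc_sub_def bounded_iff by auto
  have umeas: "u \<in> borel_measurable borel" using assms(3) unfolding visc_sub_def by simp
  have N0: "0 \<le> N" using N[of 0] by simp
  define W where "W = (2 * N) powr (P - 1)"
  have W0: "0 \<le> W" by (simp add: W_def)
  have spowW: "\<bar>spow P (u x0 - u z)\<bar> \<le> W" for z
  proof -
    have "\<bar>u x0 - u z\<bar> \<le> 2 * N" using N[of x0] N[of z] by linarith
    then show ?thesis unfolding spow_abs W_def using P1 by (intro powr_mono2) auto
  qed
  have Ub: "\<bar>delta p u x0 y\<bar> \<le> W" for y
    using spowW[of "x0 + y"] spowW[of "x0 - y"] unfolding delta_def P_def by linarith
  have Lb: "\<bar>Lintegrand p K u x0 y\<bar> \<le> W * k y" for y
    using spowW[of "x0 + y"] kpos[of y] unfolding Lintegrand_def P_def k_def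
    by (simp add: abs_mult mult_right_mono)
  obtain \<rho>0 B L where \<rho>0: "0 < \<rho>0" and BL: "\<And>y. norm y < \<rho>0 \<Longrightarrow>
     \<bar>\<phi> (x0 + y) - \<phi> x0\<bar> \<le> B * norm y \<and> \<bar>\<phi> (x0 + y) + \<phi> (x0 - y) - 2 * \<phi> x0\<bar> \<le> L * (norm y)\<^sup>2"
    using c2_est[OF assms(7) assms(5)] by blast
  define B' where "B' = max B 0"
  define L' where "L' = max L 0"
  define \<theta> where "\<theta> = (if P \<le> 2 then 2 * P - 2 else P)"
  define A where "A = (if P \<le> 2 then 2 * L' powr (P - 1) else (P - 1) * (2 * B') powr (P - 2) * L')"
  define \<beta> where "\<beta> = \<theta> - \<sigma> * P"
  define \<rho>1 where "\<rho>1 = min (min \<rho>0 (r / 2)) 1"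
  have \<rho>1: "0 < \<rho>1" "\<rho>1 \<le> \<rho>0" "\<rho>1 \<le> r / 2" "\<rho>1 \<le> 1"
    using \<rho>0 assms(5) by (auto simp: \<rho>1_def)
  have A0: "0 \<le> A" using P1 by (auto simp: A_def B'_def L'_def)
  have \<beta>0: "0 < \<beta>"
  proof (cases "P \<le> 2")
    case True
    show ?thesis
    proof (cases "P < 2")
      case True
      then have "P * (1 - \<sigma>) > 1" by (rule P2)
      then show ?thesis using True P1 by (simp add: \<beta>_def \<theta>_def algebra_simps)
    next
      case False
      then have "P = 2" using True by simp
      then show ?thesis using \<sigma>1 by (simp add: \<beta>_def \<theta>_def)
    qed
  next
    case False
    have "\<sigma> * P < 1 * P" using \<sigma>1 P1 by (intro mult_strict_right_mono) auto
    then show ?thesis using False by (simp add: \<beta>_def \<theta>_def)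
  qed
  have dphi: "\<bar>delta p \<phi> x0 y\<bar> \<le> A / 2 * norm y powr \<theta>" if y: "norm y < \<rho>1" for y
  proof (cases "y = 0")
    case True then show ?thesis by simp
  next
    case False
    have yr: "norm y < \<rho>0" using y \<rho>1 by simp
    have a: "\<bar>\<phi> x0 - \<phi> (x0 + y)\<bar> \<le> B' * norm y"
    proof -
      have "\<bar>\<phi> x0 - \<phi> (x0 + y)\<bar> \<le> B * norm y" using BL[OF yr] by linarith
      also have "\<dots> \<le> B' * norm y" by (intro mult_right_mono) (auto simp: B'_def)
      finally show ?thesis .
    qed
    have b: "\<bar>\<phi> x0 - \<phi> (x0 - y)\<bar> \<le> B' * norm y"
    proof -
      have "norm (- y) < \<rho>0" using yr by simp
      then have "\<bar>\<phi> x0 - \<phi> (x0 - y)\<bar> \<le> B * norm y" using BL[of "- y"] by simp linarith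
      also have "\<dots> \<le> B' * norm y" by (intro mult_right_mono) (auto simp: B'_def)
      finally show ?thesis .
    qed
    have ab: "\<bar>(\<phi> x0 - \<phi> (x0 + y)) + (\<phi> x0 - \<phi> (x0 - y))\<bar> \<le> L' * (norm y)\<^sup>2"
    proof -
      have "\<bar>(\<phi> x0 - \<phi> (x0 + y)) + (\<phi> x0 - \<phi> (x0 - y))\<bar> \<le> L * (norm y)\<^sup>2" using BL[OF yr] by linarith
      also have "\<dots> \<le> L' * (norm y)\<^sup>2" by (intro mult_right_mono) (auto simp: L'_def)
      finally show ?thesis .
    qed
    have "\<bar>spow P (\<phi> x0 - \<phi> (x0 + y)) + spow P (\<phi> x0 - \<phi> (x0 - y))\<bar> \<le> A * norm y powr \<theta>"
      unfolding A_def \<theta>_def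
      by (rule spow_sum_bound[OF P1 _ _ _ a b ab]) (use False in \<open>auto simp: B'_def L'_def\<close>)
    moreover have "delta p \<phi> x0 y = (spow P (\<phi> x0 - \<phi> (x0 + y)) + spow P (\<phi> x0 - \<phi> (x0 - y))) / 2"
      unfolding delta_def P_def by simp
    ultimately show ?thesis by simp
  qed
  have nearb: "\<bar>delta p \<phi> x0 y * k y\<bar> \<le> A / 2 * Lam * norm y powr (\<beta> - ?n)" if y: "norm y < \<rho>1" for y
  proof (cases "y = 0")
    case True then show ?thesis by simp
  next
    case False
    have y2: "y \<in> ball 0 2" using y \<rho>1 by simp
    have "\<bar>delta p \<phi> x0 y * k y\<bar> = \<bar>delta p \<phi> x0 y\<bar> * k y" using kpos[of y] by (simp add: abs_mult)
    also have "\<dots> \<le> (A / 2 * norm y powr \<theta>) * (Lam * norm y powr (- ?n - \<sigma> * P))"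
      using dphi[OF y] kup[OF y2] kpos[of y] A0 by (intro mult_mono) auto
    also have "\<dots> = A / 2 * Lam * (norm y powr \<theta> * norm y powr (- ?n - \<sigma> * P))" by simp
    also have "norm y powr \<theta> * norm y powr (- ?n - \<sigma> * P) = norm y powr (\<beta> - ?n)"
    proof -
      have "\<theta> + (- ?n - \<sigma> * P) = \<beta> - ?n" by (simp add: \<beta>_def)
      then show ?thesis by (simp only: powr_add[symmetric])
    qed
    finally show ?thesis .
  qed
  define hn where "hn y = A / 2 * Lam * (indicator (ball 0 \<rho>1) y *\<^sub>R norm y powr (\<beta> - ?n))" for y :: 'a
  have hnint: "integrable lborel hn"
  proof -
    have "integrable lborel (\<lambda>y. indicator (ball (0::'a) \<rho>1) y *\<^sub>R norm y powr (\<beta> - ?n))"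
      using near0_integrable[OF \<beta>0 \<rho>1(1)] unfolding set_integrable_def by simp
    from integrable_mult_right[OF this, of "A / 2 * Lam"] show ?thesis by (simp add: hn_def[abs_def])
  qed
  have hn0: "0 \<le> hn y" for y using A0 Lam0 by (simp add: hn_def)
  define \<phi>r where "\<phi>r \<rho> z = (if z \<in> ball x0 \<rho> then \<phi> z else u z)" for \<rho> z
  define \<Phi> where "\<Phi> \<rho> y = delta p (\<phi>r \<rho>) x0 y * k y" for \<rho> y
  have Phi_eq: "\<Phi> \<rho> y = (if norm y < \<rho> then delta p \<phi> x0 y else delta p u x0 y) * k y"
    if "0 < \<rho>" for \<rho> y
  proof -
    have "x0 \<in> ball x0 \<rho>" using that by simp
    moreover have "(x0 + y \<in> ball x0 \<rho>) = (norm y < \<rho>)" "(x0 - y \<in> ball x0 \<rho>) = (norm y < \<rho>)"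
      by (auto simp: dist_norm)
    ultimately show ?thesis using assms(8) unfolding \<Phi>_def \<phi>r_def delta_def by auto
  qed
  have dle: "delta p \<phi> x0 y \<le> delta p u x0 y" if y: "norm y < \<rho>1" for y
  proof -
    have "x0 + y \<in> ball x0 r" "x0 - y \<in> ball x0 r" using y \<rho>1 assms(5) by (auto simp: dist_norm)
    then have "\<phi> (x0 + y) \<ge> u (x0 + y)" "\<phi> (x0 - y) \<ge> u (x0 - y)" using assms(9) by auto
    then have "spow P (\<phi> x0 - \<phi> (x0 + y)) \<le> spow P (u x0 - u (x0 + y))"
      "spow P (\<phi> x0 - \<phi> (x0 - y)) \<le> spow P (u x0 - u (x0 - y))"
      using assms(8) P1 by (auto intro!: spow_mono)
    then show ?thesis unfolding delta_def P_def by simp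
  qed
  have Phi_mono: "\<Phi> \<rho> y \<le> \<Phi> \<rho>' y" if "0 < \<rho>'" "\<rho>' \<le> \<rho>" "\<rho> \<le> \<rho>1" for \<rho> \<rho>' y
  proof -
    have "(if norm y < \<rho> then delta p \<phi> x0 y else delta p u x0 y) \<le>
          (if norm y < \<rho>' then delta p \<phi> x0 y else delta p u x0 y)"
      using dle[of y] that by auto
    moreover have "0 < \<rho>" using that by simp
    ultimately show ?thesis unfolding Phi_eq[OF that(1)] Phi_eq[OF \<open>0 < \<rho>\<close>] using kpos[of y]
      by (intro mult_right_mono) auto
  qed
  have phir_meas: "\<phi>r \<rho> \<in> borel_measurable borel" if "0 < \<rho>" "\<rho> \<le> \<rho>1" for \<rho>
  proof -
    have c: "continuous_on (ball x0 \<rho>) \<phi>"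
    proof -
      have "ball x0 \<rho> \<subseteq> ball x0 r" using that \<rho>1 by auto
      then show ?thesis using C2_on_cont[OF C2_on_subset[OF _ assms(7)]] by blast
    qed
    have e: "\<phi>r \<rho> = (\<lambda>z. indicator (ball x0 \<rho>) z *\<^sub>R \<phi> z + indicator (- ball x0 \<rho>) z *\<^sub>R u z)"
      by (auto simp: \<phi>r_def[abs_def] indicator_def)
    show ?thesis unfolding e
      using borel_measurable_continuous_on_indicator[OF _ c] umeas by (intro borel_measurable_add) auto
  qed
  have Phi_meas: "\<Phi> \<rho> \<in> borel_measurable borel" if "0 < \<rho>" "\<rho> \<le> \<rho>1" for \<rho>
    using deltaK_meas[of "\<phi>r \<rho>" K x0 p, OF phir_meas[OF that] kmeas'] unfolding \<Phi>_def[abs_def] k_def by simp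
  have Phi0: "\<Phi> \<rho> 0 = 0" for \<rho> by (simp add: \<Phi>_def)
  have Phi_int: "integrable lborel (\<Phi> \<rho>)" if r0: "0 < \<rho>" "\<rho> \<le> \<rho>1" for \<rho>
  proof -
    have i2: "integrable lborel (\<lambda>y. W * (indicator (- ball 0 \<rho>) y *\<^sub>R k y))"
      using kint[OF r0(1)] unfolding set_integrable_def by (intro integrable_mult_right)
    have hint: "integrable lborel (\<lambda>y. hn y + W * (indicator (- ball 0 \<rho>) y *\<^sub>R k y))"
      using hnint i2 by (rule Bochner_Integration.integrable_add)
    show ?thesis
    proof (rule Bochner_Integration.integrable_bound[OF hint])
      show "\<Phi> \<rho> \<in> borel_measurable lborel" using Phi_meas[OF r0] by simp
      show "AE y in lborel. norm (\<Phi> \<rho> y) \<le> norm (hn y + W * (indicator (- ball 0 \<rho>) y *\<^sub>R k y))"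
      proof (rule AE_I2)
        fix y :: 'a
        have nn: "0 \<le> W * (indicator (- ball 0 \<rho>) y *\<^sub>R k y)" using W0 kpos[of y] by simp
        show "norm (\<Phi> \<rho> y) \<le> norm (hn y + W * (indicator (- ball 0 \<rho>) y *\<^sub>R k y))"
        proof (cases "norm y < \<rho>")
          case True
          then have "norm (\<Phi> \<rho> y) \<le> hn y" using nearb[of y] r0 unfolding Phi_eq[OF r0(1)] hn_def by simp
          then show ?thesis using nn hn0[of y] by simp
        next
          case False
          have "\<bar>delta p u x0 y * k y\<bar> \<le> W * k y" using Ub[of y] kpos[of y] by (simp add: abs_mult mult_right_mono)
          then have "norm (\<Phi> \<rho> y) \<le> W * (indicator (- ball 0 \<rho>) y *\<^sub>R k y)"
            using False unfolding Phi_eq[OF r0(1)] by simp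
          then show ?thesis using nn hn0[of y] by simp
        qed
      qed
    qed
  qed
  have Phi_le_C: "integral\<^sup>L lborel (\<Phi> \<rho>) \<le> C" if r0: "0 < \<rho>" "\<rho> \<le> \<rho>1" for \<rho>
  proof -
    have sub: "ball x0 \<rho> \<subseteq> ball 0 1" using assms(6) r0 \<rho>1 by auto
    have c2: "C2_on (ball x0 \<rho>) \<phi>" using r0 \<rho>1 by (intro C2_on_subset[OF _ assms(7)]) auto
    have ge: "\<forall>x\<in>ball x0 \<rho>. \<phi> x \<ge> u x" using assms(9) r0 \<rho>1 by auto
    obtain l where l: "l \<le> C" and PV: "PV_has_value p K (\<phi>r \<rho>) x0 l"
      using assms(3) assms(4) r0(1) sub c2 assms(8) ge unfolding visc_sub_def \<phi>r_def[abs_def] by blast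
    have ev: "\<forall>\<^sub>F e in at_right 0. set_lebesgue_integral lborel (- ball 0 e) (Lintegrand p K (\<phi>r \<rho>) x0)
        = set_lebesgue_integral lborel (- ball 0 e) (\<Phi> \<rho>)"
      using PV unfolding PV_has_value_def
    proof (elim conjE)
      assume "\<forall>\<^sub>F e in at_right 0. set_integrable lborel (- ball 0 e) (Lintegrand p K (\<phi>r \<rho>) x0)"
      then show ?thesis
      proof (rule eventually_mono)
        fix e assume "set_integrable lborel (- ball 0 e) (Lintegrand p K (\<phi>r \<rho>) x0)"
        from delta_trunc_eq(2)[OF this ksym] show "set_lebesgue_integral lborel (- ball 0 e) (Lintegrand p K (\<phi>r \<rho>) x0)
          = set_lebesgue_integral lborel (- ball 0 e) (\<Phi> \<rho>)"
          unfolding \<Phi>_def[abs_def] k_def by simp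
      qed
    qed
    have t1: "((\<lambda>e. set_lebesgue_integral lborel (- ball 0 e) (Lintegrand p K (\<phi>r \<rho>) x0)) \<longlongrightarrow> l) (at_right 0)"
      using PV unfolding PV_has_value_def by simp
    have t2: "((\<lambda>e. set_lebesgue_integral lborel (- ball 0 e) (Lintegrand p K (\<phi>r \<rho>) x0)) \<longlongrightarrow> integral\<^sup>L lborel (\<Phi> \<rho>)) (at_right 0)"
      by (subst tendsto_cong[OF ev]) (rule trunc_tendsto[OF Phi_int[OF r0] Phi0])
    have "l = integral\<^sup>L lborel (\<Phi> \<rho>)" using tendsto_unique[OF _ t1 t2] by simp
    then show ?thesis using l by simp
  qed
  define \<rho>s where "\<rho>s j = \<rho>1 / real (Suc j)" for j :: nat
  have \<rho>s: "0 < \<rho>s j" "\<rho>s j \<le> \<rho>1" for j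
    using \<rho>1 by (auto simp: \<rho>s_def field_simps)
  have \<rho>s_anti: "\<rho>s j \<le> \<rho>s i" if "i \<le> j" for i j
    using that \<rho>1 by (auto simp: \<rho>s_def intro!: divide_left_mono)
  have \<rho>s_lim: "\<rho>s \<longlonglongrightarrow> 0"
  proof -
    have "(\<lambda>j. \<rho>1 / real j) \<longlonglongrightarrow> 0" by (rule lim_const_over_n)
    then show ?thesis unfolding \<rho>s_def by (rule LIMSEQ_Suc)
  qed
  define U where "U y = delta p u x0 y * k y" for y
  have Umeas: "U \<in> borel_measurable borel"
    using deltaK_meas[of u K x0 p, OF umeas kmeas'] unfolding U_def[abs_def] k_def by simp
  have fmono: "mono (\<lambda>j. \<Phi> (\<rho>s j) y)" for y
    by (rule monoI) (intro Phi_mono \<rho>s \<rho>s_anti, assumption)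
  have flim: "(\<lambda>j. \<Phi> (\<rho>s j) y) \<longlonglongrightarrow> U y" for y
  proof (cases "y = 0")
    case True then show ?thesis by (simp add: Phi0 U_def)
  next
    case False
    have "eventually (\<lambda>j. \<rho>s j < norm y) sequentially"
      using order_tendstoD(2)[OF \<rho>s_lim] False by simp
    then have "eventually (\<lambda>j. \<Phi> (\<rho>s j) y = U y) sequentially"
      by (rule eventually_mono) (simp add: Phi_eq[OF \<rho>s(1)] U_def)
    then show ?thesis by (rule tendsto_eventually)
  qed
  have iinc: "incseq (\<lambda>j. integral\<^sup>L lborel (\<Phi> (\<rho>s j)))"
    unfolding incseq_def
    by (intro allI impI integral_mono Phi_int \<rho>s Phi_mono \<rho>s_anti)
  have ibdd: "bdd_above (range (\<lambda>j. integral\<^sup>L lborel (\<Phi> (\<rho>s j))))"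
    using Phi_le_C[OF \<rho>s] by (auto intro!: bdd_aboveI)
  define S where "S = (SUP j. integral\<^sup>L lborel (\<Phi> (\<rho>s j)))"
  have ilim: "(\<lambda>j. integral\<^sup>L lborel (\<Phi> (\<rho>s j))) \<longlonglongrightarrow> S"
    unfolding S_def by (rule LIMSEQ_incseq_SUP[OF ibdd iinc])
  have SC: "S \<le> C" unfolding S_def by (rule cSUP_least) (auto intro: Phi_le_C[OF \<rho>s])
  have Uint: "integrable lborel U" and Uval: "integral\<^sup>L lborel U = S"
    using integrable_monotone_convergence[of lborel "\<lambda>j. \<Phi> (\<rho>s j)" U S]
      integral_monotone_convergence[of lborel "\<lambda>j. \<Phi> (\<rho>s j)" U S]
      Phi_int[OF \<rho>s] fmono flim ilim Umeas by auto
  have U0: "U 0 = 0" by (simp add: U_def)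
  have intL: "set_integrable lborel (- ball 0 e) (Lintegrand p K u x0)" if e: "0 < e" for e
  proof -
    have i: "integrable lborel (\<lambda>y. W * (indicator (- ball 0 e) y *\<^sub>R k y))"
      using kint[OF e] unfolding set_integrable_def by (intro integrable_mult_right)
    show ?thesis unfolding set_integrable_def
    proof (rule Bochner_Integration.integrable_bound[OF i])
      show "(\<lambda>y. indicator (- ball 0 e) y *\<^sub>R Lintegrand p K u x0 y) \<in> borel_measurable lborel"
        using Lint_meas[of u K x0 p, OF umeas kmeas'] by simp
      show "AE y in lborel. norm (indicator (- ball 0 e) y *\<^sub>R Lintegrand p K u x0 y)
           \<le> norm (W * (indicator (- ball 0 e) y *\<^sub>R k y))"
        using Lb W0 kpos by (intro AE_I2) (auto simp: indicator_def abs_mult)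
    qed
  qed
  have evU: "\<forall>\<^sub>F e in at_right 0. set_lebesgue_integral lborel (- ball 0 e) (Lintegrand p K u x0)
        = set_lebesgue_integral lborel (- ball 0 e) U"
    using eventually_at_right_less
  proof (rule eventually_mono)
    fix e :: real assume "0 < e"
    from delta_trunc_eq(2)[OF intL[OF this] ksym] show "set_lebesgue_integral lborel (- ball 0 e) (Lintegrand p K u x0)
          = set_lebesgue_integral lborel (- ball 0 e) U"
      unfolding U_def[abs_def] k_def by simp
  qed
  have PVu: "PV_has_value p K u x0 (integral\<^sup>L lborel U)"
    unfolding PV_has_value_def
  proof
    show "\<forall>\<^sub>F e in at_right 0. set_integrable lborel (- ball 0 e) (Lintegrand p K u x0)"
      using eventually_at_right_less by (rule eventually_mono) (rule intL)
    show "((\<lambda>e. set_lebesgue_integral lborel (- ball 0 e) (Lintegrand p K u x0)) \<longlongrightarrow> integral\<^sup>L lborel U) (at_right 0)"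
      by (subst tendsto_cong[OF evU]) (rule trunc_tendsto[OF Uint U0])
  qed
  have UK: "(\<lambda>y. delta p u x0 y * K x0 y) = U" by (simp add: U_def[abs_def] k_def)
  show ?thesis unfolding UK using Uint PVu Uval SC by simp
qed


end
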